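(* Let $k\ge2$ be an integer and for $p>1$ define \[\psi_k(x)=\sin^p(\pi x)\Big(\frac1{(k-x)^p}+\frac1{(k+x-1)^p}\Big),\qquad x\in[1/2,1].\] Then: (i) for all $p>1$, the points $x=1/2$ and $x=1$ are abscissae of extrema of $\psi_k$; (ii) if $p>\pi^2(k-1/2)^2-1$, then $\psi_k$ attains an extremum at some point $x_k^*\in(1/2,A_k)$, where $A_k\in(1/2,1)$ is the unique solution in $(1/2,1)$ of the equation $\cot(\pi x)=-\frac{1}{\pi(k-x)}$; (iii) each $x_k^*\in(1/2,A_k)$ is the abscissa of an extremum of $\psi_k$ for exactly one value $p=\widetilde p$, namely \[\widetilde p=\frac{\ln\dfrac{1-\pi\cot(\pi x_k^* )(k+x_k^*-1)}{\pi\cot(\pi x_k^* )(k+x_k^*-1)-1+\frac{2k-1}{k-x_k^*}}}{\ln(k+x_k^*-1)-\ln(k-x_k^* )},\] and this value satisfies $\widetilde p>1$. *)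

theory Defs
  imports "HOL-Analysis.Analysis"
begin

definition psi :: "nat \<Rightarrow> real \<Rightarrow> real \<Rightarrow> real" where
  "psi k p x = (sin (pi * x)) powr p *
      (1 / (real k - x) powr p + 1 / (real k + x - 1) powr p)"

definition is_extremum_on :: "real set \<Rightarrow> (real \<Rightarrow> real) \<Rightarrow> real \<Rightarrow> bool" where
  "is_extremum_on S f x \<longleftrightarrow> x \<in> S \<and> (\<exists>e>0.
      (\<forall>y\<in>S. \<bar>y - x\<bar> < e \<longrightarrow> f y \<le> f x) \<or>
      (\<forall>y\<in>S. \<bar>y - x\<bar> < e \<longrightarrow> f y \<ge> f x))"

definition A_k :: "nat \<Rightarrow> real" where
  "A_k k = (THE A. 1/2 < A \<and> A < 1 \<and> cot (pi * A) = - 1 / (pi * (real k - A)))"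

definition p_tilde :: "nat \<Rightarrow> real \<Rightarrow> real" where
  "p_tilde k x =
     ln ((1 - pi * cot (pi * x) * (real k + x - 1)) /
         (pi * cot (pi * x) * (real k + x - 1) - 1 + (2 * real k - 1) / (real k - x)))
     / (ln (real k + x - 1) - ln (real k - x))"

end

theory Submission
  imports Defs
begin

definition tt :: "real \<Rightarrow> real" where "tt x = - pi * cot (pi * x)"

lemma sin_pos01: "0 < x \<Longrightarrow> x < 1 \<Longrightarrow> sin (pi * x) > 0"
  by (rule sin_gt_zero) auto

lemma tt_deriv: assumes "0 < x" "x < 1" shows "DERIV tt x :> pi\<^sup>2 + (tt x)\<^sup>2"
proof -
  have s: "sin (pi*x) \<noteq> 0" using sin_pos01[OF assms] by simp
  have "DERIV tt x :> - pi * (- inverse ((sin (pi*x))\<^sup>2) * pi)"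
    unfolding tt_def[abs_def]
    by (auto intro!: derivative_eq_intros DERIV_cot[THEN DERIV_chain2] s)
  moreover have "- pi * (- inverse ((sin (pi*x))\<^sup>2) * pi) = pi\<^sup>2 + (tt x)\<^sup>2"
  proof -
    have h: "cos (pi*x) * cos (pi*x) = 1 - sin (pi*x) * sin (pi*x)"
      using sin_cos_squared_add[of "pi*x"] by (simp add: power2_eq_square)
    show ?thesis using s by (simp add: tt_def cot_def field_simps power2_eq_square h algebra_simps)
  qed
  ultimately show ?thesis by simp
qed

lemma tt_half: "tt (1/2) = 0" by (simp add: tt_def cot_def)

lemma tt_34: "tt (3/4) = pi"
proof -
  have e: "pi * (3/4) = pi - pi/4" by simp
  have s1: "sin (pi*(3/4)) = sqrt 2/2" unfolding e by (subst sin_pi_minus) (simp add: sin_45)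
  have c1: "cos (pi*(3/4)) = - (sqrt 2/2)" unfolding e by (subst cos_pi_minus) (simp add: cos_45)
  have "cot (pi*(3/4)) = (- (sqrt 2/2)) / (sqrt 2/2)" unfolding cot_def s1 c1 by (rule refl)
  then have "cot (pi*(3/4)) = -1" by simp
  then show ?thesis by (simp add: tt_def)
qed

lemma tt_lower: assumes "1/2 \<le> x" "x < 1" shows "tt x \<ge> pi\<^sup>2 * (x - 1/2)"
proof (cases "x = 1/2")
  case True show ?thesis unfolding True by (simp add: tt_half)
next
  case False
  then have lt: "1/2 < x" using assms by simp
  have "\<exists>z. 1/2 < z \<and> z < x \<and> ((tt x - pi\<^sup>2*(x-1/2)) - (tt (1/2) - pi\<^sup>2*(1/2-1/2)) = (x - 1/2) * (tt z)\<^sup>2)"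
    apply (rule MVT2[OF lt])
    using assms by (auto intro!: derivative_eq_intros tt_deriv)
  then obtain z where "(tt x - pi\<^sup>2*(x-1/2)) - (tt (1/2) - pi\<^sup>2*(1/2-1/2)) = (x - 1/2) * (tt z)\<^sup>2" by blast
  moreover have "(x - 1/2) * (tt z)\<^sup>2 \<ge> 0" using lt by simp
  ultimately show ?thesis by (simp add: tt_half)
qed

lemma pi_sq_gt9: "pi\<^sup>2 > 9"
proof -
  have "pi*pi > 3*3" using pi_gt3 by (intro mult_strict_mono) auto
  then show ?thesis by (simp add: power2_eq_square)
qed

lemma Fid0: fixes al be t c :: real assumes "t + be \<noteq> 0" "al - t \<noteq> 0"
  shows "(c + t\<^sup>2 + - (be\<^sup>2)) / (t + be) - (al\<^sup>2 - (c + t\<^sup>2)) / (al - t) + (be + al)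
    = c * (be + al) / ((t + be) * (al - t))"
proof -
  define P where "P = t + be"
  define M where "M = al - t"
  have P: "P \<noteq> 0" and M: "M \<noteq> 0" using assms by (auto simp: P_def M_def)
  have D: "P * M \<noteq> 0" using P M by simp
  have e: "\<And>x y z. (x / P - y / M + z) * (P * M) = x * M - y * P + z * (P * M)"
    using P M by (simp add: algebra_simps)
  have "((c + t\<^sup>2 + - (be\<^sup>2)) / P - (al\<^sup>2 - (c + t\<^sup>2)) / M + (be + al)) * (P * M)
     = (c + t\<^sup>2 + - (be\<^sup>2)) * M - (al\<^sup>2 - (c + t\<^sup>2)) * P + (be + al) * (P * M)"
    by (rule e)
  also have "\<dots> = c * (be + al)" by (simp add: P_def M_def algebra_simps power2_eq_square)
  finally show ?thesis using D unfolding P_def[symmetric] M_def[symmetric] by (simp add: eq_divide_eq)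
qed

lemma Kid: fixes a b t c :: real assumes "a \<noteq> 0" "b \<noteq> 0"
  shows "(c + t\<^sup>2 + - (1/b\<^sup>2)) * (1/a - t) + (1/a\<^sup>2 - (c + t\<^sup>2)) * (t + 1/b)
    = (c + t\<^sup>2) * ((b - a)/(a*b) - 2 * t) + t * (1/a\<^sup>2 + 1/b\<^sup>2) + (b - a)/(a*b)\<^sup>2"
  using assms by (simp add: field_simps power2_eq_square)

context fixes k :: nat assumes k2: "k \<ge> 2"
begin

definition Fc :: "real \<Rightarrow> real" where "Fc x = 1 / (real k - x) - tt x"

lemma Fc_deriv: assumes "0 < x" "x < 1" shows "DERIV Fc x :> 1/(real k - x)\<^sup>2 - (pi\<^sup>2 + (tt x)\<^sup>2)"
proof -
  have "real k - x \<noteq> 0" using k2 assms by linarith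
  then show ?thesis unfolding Fc_def[abs_def]
    using assms by (auto intro!: derivative_eq_intros tt_deriv simp: power2_eq_square field_simps)
qed

lemma Fc_dec: assumes "0 < x" "x < y" "y < 1" shows "Fc y < Fc x"
proof -
  obtain z where z: "x < z" "z < y" "Fc y - Fc x = (y - x) * (1/(real k - z)\<^sup>2 - (pi\<^sup>2 + (tt z)\<^sup>2))"
    using MVT2[OF assms(2), of Fc "\<lambda>z. 1/(real k - z)\<^sup>2 - (pi\<^sup>2 + (tt z)\<^sup>2)"] Fc_deriv assms by force
  have "real k - z \<ge> 1" using k2 z assms by linarith
  then have "1/(real k - z)\<^sup>2 \<le> 1" by (simp add: power_le_one_iff divide_le_eq)
  moreover have "pi\<^sup>2 > 1" using pi_sq_gt9 by simp
  ultimately have "1/(real k - z)\<^sup>2 - (pi\<^sup>2 + (tt z)\<^sup>2) < 0" by (smt (verit) zero_le_power2)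
  then show ?thesis using z(3) assms by (smt (verit) mult_pos_neg)
qed

lemma Fc_eq: assumes "0 < x" "x < 1"
  shows "cot (pi * x) = - 1 / (pi * (real k - x)) \<longleftrightarrow> Fc x = 0"
proof -
  have "real k - x > 0" using k2 assms by linarith
  then show ?thesis unfolding Fc_def tt_def using pi_gt_zero
    by (auto simp: field_simps)
qed

lemma Fc_half: "Fc (1/2) > 0"
  using k2 by (simp add: Fc_def tt_half)

lemma Fc_34: "Fc (3/4) < 0"
proof -
  have "real k - 3/4 \<ge> 1" using k2 by simp
  then have "1 / (real k - 3/4) \<le> 1" by simp
  then show ?thesis using pi_gt3 by (simp add: Fc_def tt_34)
qed

lemma A_exists: "\<exists>A. 1/2 < A \<and> A < 3/4 \<and> Fc A = 0"
proof -
  have "\<exists>x\<ge>1/2. x \<le> 3/4 \<and> Fc x = 0"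
  proof (rule IVT2)
    show "\<forall>x. 1/2 \<le> x \<and> x \<le> 3/4 \<longrightarrow> isCont Fc x"
    proof (intro allI impI)
      fix x :: real assume "1/2 \<le> x \<and> x \<le> 3/4"
      then show "isCont Fc x" by (intro DERIV_isCont[OF Fc_deriv]) auto
    qed
  qed (use Fc_half Fc_34 in auto)
  then obtain x where "1/2 \<le> x" "x \<le> 3/4" "Fc x = 0" by blast
  moreover have "x \<noteq> 1/2" "x \<noteq> 3/4" using Fc_half Fc_34 \<open>Fc x = 0\<close> by (metis less_irrefl)+
  ultimately show ?thesis by force
qed

lemma A_unique: "\<exists>!A. 1/2 < A \<and> A < 1 \<and> cot (pi * A) = - 1 / (pi * (real k - A))"
proof -
  obtain A where A: "1/2 < A" "A < 3/4" "Fc A = 0" using A_exists by blast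
  show ?thesis
  proof (rule ex1I[of _ A])
    show "1/2 < A \<and> A < 1 \<and> cot (pi * A) = - 1 / (pi * (real k - A))"
      using A Fc_eq[of A] by auto
  next
    fix B assume B: "1/2 < B \<and> B < 1 \<and> cot (pi * B) = - 1 / (pi * (real k - B))"
    then have "Fc B = 0" using Fc_eq[of B] by auto
    show "B = A"
    proof (rule ccontr)
      assume "B \<noteq> A"
      then consider "B < A" | "A < B" by linarith
      then show False
        using Fc_dec[of B A] Fc_dec[of A B] A B \<open>Fc B = 0\<close> by (cases; auto)
    qed
  qed
qed

lemma Ak_props: "1/2 < A_k k" "A_k k < 3/4" "Fc (A_k k) = 0"
proof -
  obtain A where A: "1/2 < A" "A < 3/4" "Fc A = 0" using A_exists by blast
  have P: "1/2 < A \<and> A < 1 \<and> cot (pi * A) = - 1 / (pi * (real k - A))"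
    using A Fc_eq[of A] by auto
  have "A_k k = A" unfolding A_k_def
    by (rule the1_equality[OF A_unique P])
  then show "1/2 < A_k k" "A_k k < 3/4" "Fc (A_k k) = 0" using A by auto
qed

definition E1 :: "real \<Rightarrow> real \<Rightarrow> real" where
  "E1 p x = exp (p * (ln (sin (pi*x)) - ln (real k - x)))"
definition E2 :: "real \<Rightarrow> real \<Rightarrow> real" where
  "E2 p x = exp (p * (ln (sin (pi*x)) - ln (real k + x - 1)))"
definition Dp :: "real \<Rightarrow> real \<Rightarrow> real" where
  "Dp p x = p * (E1 p x * (1/(real k - x) - tt x) - E2 p x * (tt x + 1/(real k + x - 1)))"
definition Gf :: "real \<Rightarrow> real" where "Gf x = ln (real k + x - 1) - ln (real k - x)"
definition Wf :: "real \<Rightarrow> real" where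
  "Wf x = ln (tt x + 1/(real k + x - 1)) - ln (1/(real k - x) - tt x)"

lemma ab_pos: assumes "0 < x" "x < 1" shows "real k - x > 0" "real k + x - 1 > 0" "real k - x \<ge> 1" "real k + x - 1 \<ge> 1"
  using assms k2 by linarith+

lemma psi_eq: assumes "0 < x" "x < 1" shows "psi k p x = E1 p x + E2 p x"
proof -
  have s: "sin (pi*x) > 0" using sin_pos01 assms by simp
  note ab = ab_pos[OF assms]
  show ?thesis unfolding psi_def E1_def E2_def using s ab
    by (simp add: powr_def exp_diff right_diff_distrib field_simps)
qed

lemma psi_deriv: assumes "0 < x" "x < 1" shows "DERIV (psi k p) x :> Dp p x"
proof -
  have s: "sin (pi*x) > 0" using sin_pos01 assms by simp
  note ab = ab_pos[OF assms]
  have l1: "DERIV (\<lambda>x. ln (sin (pi*x))) x :> - tt x"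
    using s by (auto intro!: derivative_eq_intros simp: tt_def cot_def field_simps)
  have l2: "DERIV (\<lambda>x. ln (real k - x)) x :> - (1 / (real k - x))"
    using ab by (auto intro!: derivative_eq_intros simp: field_simps)
  have l3: "DERIV (\<lambda>x. ln (real k + x - 1)) x :> 1 / (real k + x - 1)"
    using ab by (auto intro!: derivative_eq_intros simp: field_simps)
  have h1: "DERIV (\<lambda>x. p * (ln (sin (pi*x)) - ln (real k - x))) x :> p * (- tt x - (- (1 / (real k - x))))"
    by (intro DERIV_cmult DERIV_diff l1 l2)
  have h2: "DERIV (\<lambda>x. p * (ln (sin (pi*x)) - ln (real k + x - 1))) x :> p * (- tt x - 1 / (real k + x - 1))"
    by (intro DERIV_cmult DERIV_diff l1 l3)
  have d0: "DERIV (\<lambda>x. E1 p x + E2 p x) x :> E1 p x * (p * (- tt x - (- (1 / (real k - x))))) + E2 p x * (p * (- tt x - 1 / (real k + x - 1)))"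
    unfolding E1_def[abs_def] E2_def[abs_def]
    by (intro DERIV_add DERIV_fun_exp h1 h2)
  have d: "DERIV (\<lambda>x. E1 p x + E2 p x) x :> Dp p x"
    using d0 unfolding Dp_def by (simp add: algebra_simps)
  show ?thesis
    by (rule has_field_derivative_transform_within_open[OF d, of "{0<..<1}"])
       (use assms psi_eq in auto)
qed

lemma A_facts: "1/2 < A_k k" "A_k k < 3/4" "Fc (A_k k) = 0" using Ak_props by auto

lemma pos_terms: assumes "1/2 \<le> x" "x < A_k k"
  shows "1/(real k - x) - tt x > 0" "tt x + 1/(real k + x - 1) > 0" "tt x \<ge> 0"
proof -
  have x1: "0 < x" "x < 1" using assms A_facts by auto
  show "tt x \<ge> 0" using tt_lower[of x] assms x1 by (smt (verit) mult_nonneg_nonneg zero_le_power2)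
  moreover have "1/(real k + x - 1) > 0" using ab_pos[OF x1] by simp
  ultimately show "tt x + 1/(real k + x - 1) > 0" by linarith
  have "Fc x > Fc (A_k k)" using Fc_dec[of x "A_k k"] assms A_facts by auto
  then show "1/(real k - x) - tt x > 0" using A_facts by (simp add: Fc_def)
qed

lemma Gf_pos: assumes "1/2 < x" "x < 1" shows "Gf x > 0"
  using assms k2 unfolding Gf_def by (simp add: ln_less_cancel_iff)

lemma sign_Dp: assumes "1/2 < x" "x < A_k k" "p > 0"
  shows "Dp p x > 0 \<longleftrightarrow> p * Gf x > Wf x" "Dp p x < 0 \<longleftrightarrow> p * Gf x < Wf x"
proof -
  have x1: "0 < x" "x < 1" using assms A_facts by auto
  note ab = ab_pos[OF x1]
  have s: "sin (pi*x) > 0" using sin_pos01 x1 by simp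
  note pt = pos_terms[of x] 
  have P1: "E1 p x * (1/(real k - x) - tt x) > 0" using pt assms by (simp add: E1_def)
  have P2: "E2 p x * (tt x + 1/(real k + x - 1)) > 0" using pt assms by (simp add: E2_def)
  have L1: "ln (E1 p x * (1/(real k - x) - tt x)) = p * (ln (sin (pi*x)) - ln (real k - x)) + ln (1/(real k - x) - tt x)"
    using pt assms by (simp add: E1_def ln_mult)
  have L2: "ln (E2 p x * (tt x + 1/(real k + x - 1))) = p * (ln (sin (pi*x)) - ln (real k + x - 1)) + ln (tt x + 1/(real k + x - 1))"
    using pt assms by (simp add: E2_def ln_mult)
  have "Dp p x > 0 \<longleftrightarrow> E2 p x * (tt x + 1/(real k + x - 1)) < E1 p x * (1/(real k - x) - tt x)"
    using assms unfolding Dp_def by (simp add: zero_less_mult_iff)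
  also have "\<dots> \<longleftrightarrow> ln (E2 p x * (tt x + 1/(real k + x - 1))) < ln (E1 p x * (1/(real k - x) - tt x))"
    using P1 P2 by simp
  also have "\<dots> \<longleftrightarrow> p * Gf x > Wf x" unfolding L1 L2 Gf_def Wf_def by (simp add: algebra_simps)
  finally show "Dp p x > 0 \<longleftrightarrow> p * Gf x > Wf x" .
  have "Dp p x < 0 \<longleftrightarrow> E2 p x * (tt x + 1/(real k + x - 1)) > E1 p x * (1/(real k - x) - tt x)"
    using assms unfolding Dp_def by (simp add: mult_less_0_iff)
  also have "\<dots> \<longleftrightarrow> ln (E2 p x * (tt x + 1/(real k + x - 1))) > ln (E1 p x * (1/(real k - x) - tt x))"
    using P1 P2 by simp
  also have "\<dots> \<longleftrightarrow> p * Gf x < Wf x" unfolding L1 L2 Gf_def Wf_def by (simp add: algebra_simps)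
  finally show "Dp p x < 0 \<longleftrightarrow> p * Gf x < Wf x" .
qed

lemma p_tilde_eq: assumes "1/2 < x" "x < A_k k" shows "p_tilde k x = Wf x / Gf x"
proof -
  have x1: "0 < x" "x < 1" using assms A_facts by auto
  note ab = ab_pos[OF x1]
  note pt = pos_terms[of x]
  have c: "pi * cot (pi * x) = - tt x" by (simp add: tt_def)
  have e: "(1 - pi * cot (pi * x) * (real k + x - 1)) /
         (pi * cot (pi * x) * (real k + x - 1) - 1 + (2 * real k - 1) / (real k - x))
       = (tt x + 1/(real k + x - 1)) / (1/(real k - x) - tt x)"
    unfolding c using ab pt assms by (simp add: field_simps)
  show ?thesis unfolding p_tilde_def e Wf_def Gf_def
    using pt assms by (simp add: ln_div)
qed

definition Kf :: "real \<Rightarrow> real" where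
  "Kf x = (tt x + 1/(real k + x - 1)) * (1/(real k - x) - tt x)"
definition Ff :: "real \<Rightarrow> real" where "Ff x = Wf x + Gf x"

lemma Kf_deriv: assumes "0 < x" "x < 1"
  shows "DERIV Kf x :> (pi\<^sup>2 + (tt x)\<^sup>2) * ((2*x-1)/((real k - x)*(real k + x - 1)) - 2 * tt x)
      + tt x * (1/(real k - x)\<^sup>2 + 1/(real k + x - 1)\<^sup>2) + (2*x-1)/((real k - x)*(real k + x - 1))\<^sup>2"
proof -
  note ab = ab_pos[OF assms]
  have d1: "DERIV (\<lambda>x. 1/(real k + x - 1)) x :> - (1/(real k + x - 1)\<^sup>2)"
    using ab by (auto intro!: derivative_eq_intros simp: field_simps power2_eq_square)
  have d2: "DERIV (\<lambda>x. 1/(real k - x)) x :> 1/(real k - x)\<^sup>2"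
    using ab by (auto intro!: derivative_eq_intros simp: field_simps power2_eq_square)
  have d: "DERIV Kf x :> (pi\<^sup>2 + (tt x)\<^sup>2 + - (1/(real k + x - 1)\<^sup>2)) * (1/(real k - x) - tt x)
            + (1/(real k - x)\<^sup>2 - (pi\<^sup>2 + (tt x)\<^sup>2)) * (tt x + 1/(real k + x - 1))"
    unfolding Kf_def[abs_def]
    by (intro DERIV_mult DERIV_add DERIV_diff d1 d2 tt_deriv assms)
  have "(pi\<^sup>2 + (tt x)\<^sup>2 + - (1/(real k + x - 1)\<^sup>2)) * (1/(real k - x) - tt x)
            + (1/(real k - x)\<^sup>2 - (pi\<^sup>2 + (tt x)\<^sup>2)) * (tt x + 1/(real k + x - 1))
       = (pi\<^sup>2 + (tt x)\<^sup>2) * ((2*x-1)/((real k - x)*(real k + x - 1)) - 2 * tt x)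
      + tt x * (1/(real k - x)\<^sup>2 + 1/(real k + x - 1)\<^sup>2) + (2*x-1)/((real k - x)*(real k + x - 1))\<^sup>2"
    using Kid[where a="real k - x" and b="real k + x - 1" and t="tt x" and c="pi\<^sup>2"] ab by simp
  then show ?thesis using d by simp
qed

lemma Kf_deriv_neg: assumes "1/2 < x" "x < 1"
  shows "(pi\<^sup>2 + (tt x)\<^sup>2) * ((2*x-1)/((real k - x)*(real k + x - 1)) - 2 * tt x)
      + tt x * (1/(real k - x)\<^sup>2 + 1/(real k + x - 1)\<^sup>2) + (2*x-1)/((real k - x)*(real k + x - 1))\<^sup>2 < 0"
proof -
  have x1: "0 < x" "x < 1" using assms by auto
  note ab = ab_pos[OF x1]
  define t where "t = tt x"
  define d where "d = 2*x - 1"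
  define r where "r = 1/((real k - x)*(real k + x - 1))"
  define ra where "ra = 1/(real k - x)\<^sup>2"
  define rb where "rb = 1/(real k + x - 1)\<^sup>2"
  have d0: "d > 0" using assms by (simp add: d_def)
  have tl: "pi\<^sup>2 * d \<le> 2 * t" using tt_lower[of x] assms by (simp add: t_def d_def algebra_simps)
  have p9: "pi\<^sup>2 > 9" by (rule pi_sq_gt9)
  have t0: "t > 0"
  proof -
    have "pi\<^sup>2 * d > 0" using d0 p9 by simp
    then show ?thesis using tl by simp
  qed
  have "(real k - x)*(real k + x - 1) \<ge> 1*1" using ab by (intro mult_mono) auto
  then have r1: "r \<le> 1" "r > 0" using ab by (auto simp: r_def)
  have ra1: "ra \<le> 1" using ab by (simp add: ra_def power_le_one_iff)
  have rb1: "rb \<le> 1" using ab by (simp add: rb_def power_le_one_iff)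
  have e1: "d * r \<le> d" using r1 d0 by (simp add: mult_left_le)
  have "9 * d \<le> pi\<^sup>2 * d" using p9 d0 by simp
  then have e2: "9 * d \<le> 2 * t" using tl by linarith
  have neg: "d * r - 2 * t < 0" using e1 e2 d0 by linarith
  have e3: "(pi\<^sup>2 + t\<^sup>2) * (d * r - 2 * t) \<le> pi\<^sup>2 * (d * r - 2 * t)"
    using neg by (intro mult_right_mono_neg) auto
  have e4: "pi\<^sup>2 * (d * r) \<le> pi\<^sup>2 * d" using e1 by simp
  have e5: "t * (ra + rb) \<le> t * 2" using ra1 rb1 t0 by (intro mult_left_mono) auto
  have "r\<^sup>2 \<le> 1" using r1 by (simp add: power_le_one_iff)
  then have e6: "d * r\<^sup>2 \<le> d" using d0 by (simp add: mult_left_le)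
  have e7: "pi\<^sup>2 * t > 9 * t" using p9 t0 by simp
  have e8: "pi\<^sup>2 * (d * r - 2 * t) = pi\<^sup>2 * (d * r) - 2 * (pi\<^sup>2 * t)" by (simp add: algebra_simps)
  have "(pi\<^sup>2 + t\<^sup>2) * (d * r - 2 * t) + t * (ra + rb) + d * r\<^sup>2 < 0"
    using e2 e3 e4 e5 e6 e7 e8 tl t0 by linarith
  then show ?thesis by (simp add: t_def d_def r_def ra_def rb_def power2_eq_square divide_simps)
qed

definition Kd :: "real \<Rightarrow> real" where
  "Kd x = (pi\<^sup>2 + (tt x)\<^sup>2) * ((2*x-1)/((real k - x)*(real k + x - 1)) - 2 * tt x)
      + tt x * (1/(real k - x)\<^sup>2 + 1/(real k + x - 1)\<^sup>2) + (2*x-1)/((real k - x)*(real k + x - 1))\<^sup>2"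

lemma Kf_dec: assumes "1/2 \<le> y" "y < z" "z < A_k k" shows "Kf z < Kf y"
proof -
  have A: "A_k k < 1" using A_facts by simp
  have "\<exists>c. y < c \<and> c < z \<and> Kf z - Kf y = (z - y) * Kd c"
  proof (rule MVT2[OF assms(2)])
    fix x assume "y \<le> x" "x \<le> z"
    then have "0 < x" "x < 1" using assms A by linarith+
    then show "DERIV Kf x :> Kd x" unfolding Kd_def by (rule Kf_deriv)
  qed
  then obtain c where c: "y < c" "c < z" "Kf z - Kf y = (z - y) * Kd c" by blast
  have "1/2 < c" "c < 1" using c assms A by linarith+
  then have "Kd c < 0" unfolding Kd_def by (rule Kf_deriv_neg)
  then show ?thesis using c(3) assms by (smt (verit) mult_pos_neg)
qed

lemma Kf_half: "Kf (1/2) = 1 / (real k - 1/2)\<^sup>2"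
  by (simp add: Kf_def tt_half power2_eq_square)

lemma Kf_pos: assumes "1/2 \<le> x" "x < A_k k" shows "Kf x > 0"
  using pos_terms[OF assms] unfolding Kf_def by simp

lemma Gf_deriv: assumes "0 < x" "x < 1" shows "DERIV Gf x :> 1/(real k + x - 1) + 1/(real k - x)"
proof -
  note ab = ab_pos[OF assms]
  show ?thesis unfolding Gf_def[abs_def]
    using ab by (auto intro!: derivative_eq_intros simp: field_simps)
qed

lemma Ff_deriv: assumes "1/2 \<le> x" "x < A_k k"
  shows "DERIV Ff x :> pi\<^sup>2 * (1/(real k + x - 1) + 1/(real k - x)) / Kf x"
proof -
  have x1: "0 < x" "x < 1" using assms A_facts by auto
  note ab = ab_pos[OF x1]
  note pt = pos_terms[OF assms]
  have d1: "DERIV (\<lambda>x. 1/(real k + x - 1)) x :> - (1/(real k + x - 1)\<^sup>2)"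
    using ab by (auto intro!: derivative_eq_intros simp: field_simps power2_eq_square)
  have d2: "DERIV (\<lambda>x. 1/(real k - x)) x :> 1/(real k - x)\<^sup>2"
    using ab by (auto intro!: derivative_eq_intros simp: field_simps power2_eq_square)
  have dW: "DERIV Wf x :> (pi\<^sup>2 + (tt x)\<^sup>2 + - (1/(real k + x - 1)\<^sup>2)) / (tt x + 1/(real k + x - 1))
      - (1/(real k - x)\<^sup>2 - (pi\<^sup>2 + (tt x)\<^sup>2)) / (1/(real k - x) - tt x)"
  proof -
    have w1: "DERIV (\<lambda>x. ln (tt x + 1/(real k + x - 1))) x :> (1/(tt x + 1/(real k + x - 1))) * (pi\<^sup>2 + (tt x)\<^sup>2 + - (1/(real k + x - 1)\<^sup>2))"
      by (rule DERIV_chain2[where f=ln and g="\<lambda>x. tt x + 1/(real k + x - 1)", OF DERIV_ln_divide[OF pt(2)]]) (intro DERIV_add tt_deriv d1 x1)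
    have w2: "DERIV (\<lambda>x. ln (1/(real k - x) - tt x)) x :> (1/(1/(real k - x) - tt x)) * (1/(real k - x)\<^sup>2 - (pi\<^sup>2 + (tt x)\<^sup>2))"
      by (rule DERIV_chain2[where f=ln and g="\<lambda>x. 1/(real k - x) - tt x", OF DERIV_ln_divide[OF pt(1)]]) (intro DERIV_diff tt_deriv d2 x1)
    show ?thesis unfolding Wf_def[abs_def] using DERIV_diff[OF w1 w2] by simp
  qed
  have "DERIV Ff x :> (pi\<^sup>2 + (tt x)\<^sup>2 + - (1/(real k + x - 1)\<^sup>2)) / (tt x + 1/(real k + x - 1))
      - (1/(real k - x)\<^sup>2 - (pi\<^sup>2 + (tt x)\<^sup>2)) / (1/(real k - x) - tt x) + (1/(real k + x - 1) + 1/(real k - x))"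
    unfolding Ff_def[abs_def] by (intro DERIV_add dW Gf_deriv x1)
  moreover have "(pi\<^sup>2 + (tt x)\<^sup>2 + - (1/(real k + x - 1)\<^sup>2)) / (tt x + 1/(real k + x - 1))
      - (1/(real k - x)\<^sup>2 - (pi\<^sup>2 + (tt x)\<^sup>2)) / (1/(real k - x) - tt x) + (1/(real k + x - 1) + 1/(real k - x))
      = pi\<^sup>2 * (1/(real k + x - 1) + 1/(real k - x)) / Kf x"
    unfolding Kf_def
    using Fid0[where al="1/(real k - x)" and be="1/(real k + x - 1)" and t="tt x" and c="pi\<^sup>2"] ab pt by (simp add: power_one_over)
  ultimately show ?thesis by simp
qed

lemma Ff_half: "Ff (1/2) = 0" "Gf (1/2) = 0"
  by (simp_all add: Ff_def Wf_def Gf_def tt_half)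

lemma Q_bounds: assumes "1/2 < x" "x < A_k k"
  shows "pi\<^sup>2 / Kf (1/2) < Ff x / Gf x" "Ff x / Gf x < pi\<^sup>2 / Kf x"
proof -
  have A: "A_k k < 1" using A_facts by simp
  have "\<exists>c. 1/2 < c \<and> c < x \<and> (Ff x - Ff (1/2)) * (1/(real k + c - 1) + 1/(real k - c))
          = (Gf x - Gf (1/2)) * (pi\<^sup>2 * (1/(real k + c - 1) + 1/(real k - c)) / Kf c)"
  proof (rule GMVT'[OF assms(1)])
    fix z :: real assume z: "1/2 \<le> z" "z \<le> x"
    show "isCont Ff z" using z assms by (intro DERIV_isCont[OF Ff_deriv]) auto
    show "isCont Gf z" using z assms A by (intro DERIV_isCont[OF Gf_deriv]) auto
  next
    fix z :: real assume z: "1/2 < z" "z < x"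
    show "DERIV Ff z :> pi\<^sup>2 * (1/(real k + z - 1) + 1/(real k - z)) / Kf z"
      using z assms by (intro Ff_deriv) auto
    show "DERIV Gf z :> 1/(real k + z - 1) + 1/(real k - z)"
      using z assms A by (intro Gf_deriv) auto
  qed
  then obtain c where c: "1/2 < c" "c < x" and eq: "Ff x * (1/(real k + c - 1) + 1/(real k - c))
          = Gf x * (pi\<^sup>2 * (1/(real k + c - 1) + 1/(real k - c)) / Kf c)"
    using Ff_half by auto
  have c1: "0 < c" "c < 1" using c assms A by auto
  have "1/(real k + c - 1) > 0" "1/(real k - c) > 0" using ab_pos[OF c1] by simp_all
  then have gp: "1/(real k + c - 1) + 1/(real k - c) > 0" by linarith
  have G0: "Gf x > 0" using Gf_pos assms A by simp
  have Kc: "Kf c > 0" using Kf_pos[of c] c assms by simp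
  define g where "g = 1/(real k + c - 1) + 1/(real k - c)"
  have eq2: "Ff x * g = (Gf x * pi\<^sup>2 / Kf c) * g" using eq unfolding g_def[symmetric] by simp
  have gn: "g \<noteq> 0" using gp unfolding g_def by simp
  have "Ff x = Gf x * pi\<^sup>2 / Kf c" using mult_right_cancel[OF gn] eq2 by blast
  then have Q: "Ff x / Gf x = pi\<^sup>2 / Kf c"
    using G0 Kc by (simp add: field_simps)
  have "Kf c < Kf (1/2)" using Kf_dec[of "1/2" c] c assms by simp
  then show "pi\<^sup>2 / Kf (1/2) < Ff x / Gf x" unfolding Q using Kc pi_gt_zero
    by (simp add: divide_strict_left_mono)
  have "Kf x < Kf c" using Kf_dec[of c x] c assms by simp
  moreover have "Kf x > 0" using Kf_pos[of x] assms by simp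
  ultimately show "Ff x / Gf x < pi\<^sup>2 / Kf x" unfolding Q using pi_gt_zero
    by (simp add: divide_strict_left_mono)
qed

lemma Q_mono: assumes "1/2 < y" "y < z" "z < A_k k" shows "Ff y / Gf y < Ff z / Gf z"
proof -
  have A: "A_k k < 1" using A_facts by simp
  define Qd where "Qd w = (pi\<^sup>2 * (1/(real k + w - 1) + 1/(real k - w)) / Kf w * Gf w
      - Ff w * (1/(real k + w - 1) + 1/(real k - w))) / (Gf w * Gf w)" for w
  have "\<exists>c. y < c \<and> c < z \<and> Ff z / Gf z - Ff y / Gf y = (z - y) * Qd c"
  proof (rule MVT2[OF assms(2)])
    fix w assume w: "y \<le> w" "w \<le> z"
    then have w1: "1/2 \<le> w" "w < A_k k" "0 < w" "w < 1" using assms A by linarith+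
    have "Gf w \<noteq> 0" using Gf_pos[of w] w1 assms w by simp
    then show "DERIV (\<lambda>w. Ff w / Gf w) w :> Qd w" unfolding Qd_def
      by (intro DERIV_divide Ff_deriv Gf_deriv w1)
  qed
  then obtain c where c: "y < c" "c < z" "Ff z / Gf z - Ff y / Gf y = (z - y) * Qd c" by blast
  have c1: "1/2 < c" "c < A_k k" "0 < c" "c < 1" using c assms A by linarith+
  define g where "g = 1/(real k + c - 1) + 1/(real k - c)"
  have "1/(real k + c - 1) > 0" "1/(real k - c) > 0" using ab_pos[of c] c1 by simp_all
  then have gp: "g > 0" unfolding g_def by linarith
  have G0: "Gf c > 0" using Gf_pos c1 by simp
  have Kc: "Kf c > 0" using Kf_pos[of c] c1 by simp
  have "Ff c / Gf c < pi\<^sup>2 / Kf c" using Q_bounds(2)[OF c1(1,2)] .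
  then have "Ff c < pi\<^sup>2 / Kf c * Gf c" using G0 by (simp add: divide_less_eq)
  then have "Ff c * g < pi\<^sup>2 / Kf c * Gf c * g" by (rule mult_strict_right_mono[OF _ gp])
  then have "pi\<^sup>2 * g / Kf c * Gf c - Ff c * g > 0" by (simp add: algebra_simps)
  then have "Qd c > 0" unfolding Qd_def g_def[symmetric] using G0 by simp
  then show ?thesis using c(3) assms by (smt (verit) mult_pos_pos)
qed

lemma incr_help: fixes f f' :: "real \<Rightarrow> real"
  assumes "a < b" "\<And>x. a \<le> x \<Longrightarrow> x \<le> b \<Longrightarrow> DERIV f x :> f' x" "\<And>x. a < x \<Longrightarrow> x < b \<Longrightarrow> f' x > 0"
  shows "f a < f b"
proof -
  obtain z where "a < z" "z < b" "f b - f a = (b - a) * f' z" using MVT2[OF assms(1,2)] by blast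
  then show ?thesis using assms(1) assms(3)[of z] by (smt (verit) mult_pos_pos)
qed

lemma decr_help: fixes f f' :: "real \<Rightarrow> real"
  assumes "a < b" "\<And>x. a \<le> x \<Longrightarrow> x \<le> b \<Longrightarrow> DERIV f x :> f' x" "\<And>x. a < x \<Longrightarrow> x < b \<Longrightarrow> f' x < 0"
  shows "f b < f a"
proof -
  obtain z where "a < z" "z < b" "f b - f a = (b - a) * f' z" using MVT2[OF assms(1,2)] by blast
  then show ?thesis using assms(1) assms(3)[of z] by (smt (verit) mult_pos_neg)
qed

lemma sign_Q: assumes "1/2 < x" "x < A_k k" "p > 0"
  shows "Dp p x > 0 \<longleftrightarrow> p > Ff x / Gf x - 1" "Dp p x < 0 \<longleftrightarrow> p < Ff x / Gf x - 1"
    "p_tilde k x = Ff x / Gf x - 1"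
proof -
  have G0: "Gf x > 0" using Gf_pos assms A_facts by simp
  have e: "Wf x / Gf x = Ff x / Gf x - 1" using G0 by (simp add: Ff_def field_simps)
  show "p_tilde k x = Ff x / Gf x - 1" using p_tilde_eq[OF assms(1,2)] e by simp
  show "Dp p x > 0 \<longleftrightarrow> p > Ff x / Gf x - 1" unfolding sign_Dp(1)[OF assms] e[symmetric]
    using G0 by (simp add: pos_divide_less_eq mult.commute)
  show "Dp p x < 0 \<longleftrightarrow> p < Ff x / Gf x - 1" unfolding sign_Dp(2)[OF assms] e[symmetric]
    using G0 by (simp add: pos_less_divide_eq mult.commute)
qed

lemma T_eq: "pi\<^sup>2 / Kf (1/2) - 1 = pi\<^sup>2 * (real k - 1/2)\<^sup>2 - 1"
  by (simp add: Kf_half)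

lemma deriv_S: assumes "1/2 \<le> x" "x \<le> A_k k" shows "DERIV (psi k p) x :> Dp p x"
  using assms A_facts by (intro psi_deriv) auto

lemma psi_nonneg: "psi k p y \<ge> 0"
  unfolding psi_def by (intro mult_nonneg_nonneg add_nonneg_nonneg) auto

lemma T_gt: "pi\<^sup>2 * (real k - 1/2)\<^sup>2 > 9"
proof -
  have "real k - 1/2 \<ge> 1" using k2 by simp
  then have h: "(real k - 1/2)\<^sup>2 \<ge> 1" by (rule one_le_power)
  have m: "pi\<^sup>2 * 1 \<le> pi\<^sup>2 * (real k - 1/2)\<^sup>2" by (rule mult_left_mono[OF h]) simp
  show ?thesis using m pi_sq_gt9 by linarith
qed

lemma part1_one: "is_extremum_on {1/2..1} (psi k p) 1"
proof -
  have "psi k p 1 = 0" by (simp add: psi_def)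
  then show ?thesis unfolding is_extremum_on_def using psi_nonneg
    by (intro conjI exI[of _ 1]) auto
qed

lemma near_half: assumes "p > pi\<^sup>2 * (real k - 1/2)\<^sup>2 - 1"
  shows "\<exists>e>0. e \<le> A_k k - 1/2 \<and> (\<forall>y. 1/2 < y \<and> y < 1/2 + e \<longrightarrow> psi k p (1/2) < psi k p y)"
proof -
  have A: "1/2 < A_k k" "A_k k < 1" using A_facts by auto
  have K0: "Kf (1/2) > 0" using Kf_pos[of "1/2"] A by simp
  have T9: "pi\<^sup>2 * (real k - 1/2)\<^sup>2 \<ge> 0" by simp
  have p1: "p + 1 > 0" using assms T9 by linarith
  have "pi\<^sup>2 / Kf (1/2) < p + 1" using assms T_eq by linarith
  then have "pi\<^sup>2 / (p + 1) < Kf (1/2)" using K0 p1 by (simp add: field_simps)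
  define r where "r = Kf (1/2) - pi\<^sup>2 / (p + 1)"
  have r0: "r > 0" using \<open>pi\<^sup>2 / (p + 1) < Kf (1/2)\<close> by (simp add: r_def)
  have "isCont Kf (1/2)" by (rule DERIV_isCont[OF Kf_deriv]) auto
  then have "Kf \<midarrow>(1/2)\<rightarrow> Kf (1/2)" by (simp add: isCont_def)
  then obtain d where d: "d > 0" "\<And>x. x \<noteq> 1/2 \<and> norm (x - 1/2) < d \<Longrightarrow> norm (Kf x - Kf (1/2)) < r"
    unfolding LIM_eq using r0 by blast
  define e where "e = min d (A_k k - 1/2)"
  have e0: "e > 0" using d A by (simp add: e_def)
  have "\<forall>y. 1/2 < y \<and> y < 1/2 + e \<longrightarrow> psi k p (1/2) < psi k p y"
  proof (intro allI impI)
    fix y assume y: "1/2 < y \<and> y < 1/2 + e"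
    show "psi k p (1/2) < psi k p y"
    proof (rule incr_help[where f = "psi k p" and f' = "Dp p" and a = "1/2" and b = y])
      show "1/2 < y" using y by simp
    next
      fix x assume "1/2 \<le> x" "x \<le> y"
      then show "DERIV (psi k p) x :> Dp p x" using y e_def by (intro deriv_S) auto
    next
      fix x assume x: "1/2 < x" "x < y"
      have xA: "x < A_k k" using x y e_def by simp
      have "norm (Kf x - Kf (1/2)) < r" using d(2)[of x] x y e_def by auto
      then have Kx: "Kf x > pi\<^sup>2 / (p + 1)" unfolding r_def by simp
      have Kxp: "Kf x > 0" using Kf_pos[of x] x xA by simp
      have "pi\<^sup>2 / Kf x < p + 1" using Kx Kxp p1 by (simp add: field_simps)
      then have "Ff x / Gf x - 1 < p" using Q_bounds(2)[OF x(1) xA] by linarith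
      moreover have "p > 0" using assms T_gt by linarith
      ultimately show "Dp p x > 0" using sign_Q(1)[OF x(1) xA] by simp
    qed
  qed
  then show ?thesis using e0 by (intro exI[of _ e]) (auto simp: e_def)
qed

lemma part1_half: assumes "p > 0" shows "is_extremum_on {1/2..1} (psi k p) (1/2)"
proof (cases "p > pi\<^sup>2 * (real k - 1/2)\<^sup>2 - 1")
  case True
  obtain e where e: "e > 0" "\<forall>y. 1/2 < y \<and> y < 1/2 + e \<longrightarrow> psi k p (1/2) < psi k p y"
    using near_half[OF True] by blast
  show ?thesis unfolding is_extremum_on_def
  proof (intro conjI exI[of _ e] disjI2)
    show "\<forall>y\<in>{1/2..1}. \<bar>y - 1/2\<bar> < e \<longrightarrow> psi k p (1/2) \<le> psi k p y"
    proof (intro ballI impI)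
      fix y :: real assume "y \<in> {1/2..1}" "\<bar>y - 1/2\<bar> < e"
      then show "psi k p (1/2) \<le> psi k p y"
      proof (cases "y = 1/2")
        case True show ?thesis unfolding True by simp
      next
        case False then show ?thesis using e(2)[rule_format, of y] \<open>y \<in> {1/2..1}\<close> \<open>\<bar>y - 1/2\<bar> < e\<close> by auto
      qed
    qed
  qed (use e in auto)
next
  case False
  note npT = False
  have A: "1/2 < A_k k" "A_k k < 1" using A_facts by auto
  define e where "e = A_k k - 1/2"
  show ?thesis unfolding is_extremum_on_def
  proof (intro conjI exI[of _ e] disjI1)
    show "\<forall>y\<in>{1/2..1}. \<bar>y - 1/2\<bar> < e \<longrightarrow> psi k p y \<le> psi k p (1/2)"
    proof (intro ballI impI)
      fix y :: real assume y: "y \<in> {1/2..1}" "\<bar>y - 1/2\<bar> < e"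
      show "psi k p y \<le> psi k p (1/2)"
      proof (cases "y = 1/2")
        case True show ?thesis unfolding True by simp
      next
        case False
        then have y2: "1/2 < y" "y < A_k k" using y e_def by auto
        have "psi k p y < psi k p (1/2)"
        proof (rule decr_help[where f = "psi k p" and f' = "Dp p" and a = "1/2" and b = y])
          show "1/2 < y" using y2 by simp
        next
          fix x assume "1/2 \<le> x" "x \<le> y"
          then show "DERIV (psi k p) x :> Dp p x" using y2 by (intro deriv_S) auto
        next
          fix x assume x: "1/2 < x" "x < y"
          have xA: "x < A_k k" using x y2 by simp
          have "pi\<^sup>2 / Kf (1/2) < Ff x / Gf x" using Q_bounds(1)[OF x(1) xA] .
          then have "p < Ff x / Gf x - 1" using npT T_eq by linarith
          then show "Dp p x < 0" using sign_Q(2)[OF x(1) xA assms] by simp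
        qed
        then show ?thesis by simp
      qed
    qed
  qed (use A e_def in auto)
qed

lemma part2: assumes "p > pi\<^sup>2 * (real k - 1/2)\<^sup>2 - 1"
  shows "\<exists>x. 1/2 < x \<and> x < A_k k \<and> is_extremum_on {1/2..1} (psi k p) x"
proof -
  define A where "A = A_k k"
  have A: "1/2 < A" "A < 1" "Fc A = 0" using A_facts by (auto simp: A_def)
  have p0: "p > 0" using assms T_gt by linarith
  obtain e where e: "e > 0" "e \<le> A - 1/2" "\<forall>y. 1/2 < y \<and> y < 1/2 + e \<longrightarrow> psi k p (1/2) < psi k p y"
    using near_half[OF assms] unfolding A_def by blast
  define y0 where "y0 = 1/2 + e/2"
  have y0: "1/2 < y0" "y0 \<le> A" "psi k p (1/2) < psi k p y0" using e by (auto simp: y0_def)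
  have "Dp p A < 0"
  proof -
    have A1: "0 < A" "A < 1" using A by auto
    have z: "1/(real k - A) - tt A = 0" using A(3) by (simp add: Fc_def)
    have tA: "tt A \<ge> 0" using tt_lower[of A] A by (smt (verit) mult_nonneg_nonneg zero_le_power2)
    have "1/(real k + A - 1) > 0" using ab_pos[OF A1] by simp
    then have "tt A + 1/(real k + A - 1) > 0" using tA by linarith
    then have "E2 p A * (tt A + 1/(real k + A - 1)) > 0" unfolding E2_def by (intro mult_pos_pos exp_gt_zero)
    then show ?thesis unfolding Dp_def z using p0 by (simp add: mult_pos_neg)
  qed
  then obtain d where d: "d > 0" "\<forall>h>0. h < d \<longrightarrow> psi k p A < psi k p (A - h)"
    using DERIV_neg_dec_left[OF deriv_S[of A p]] A by (auto simp: A_def)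
  have cont: "continuous_on {1/2..A} (psi k p)"
    by (intro continuous_at_imp_continuous_on ballI DERIV_isCont[OF deriv_S]) (auto simp: A_def)
  obtain x where x: "x \<in> {1/2..A}" "\<forall>y\<in>{1/2..A}. psi k p y \<le> psi k p x"
    using continuous_attains_sup[OF compact_Icc _ cont] A by auto
  have "x \<noteq> 1/2"
  proof
    assume h: "x = 1/2"
    have "psi k p y0 \<le> psi k p x" using x(2) y0 by auto
    then show False using y0(3) unfolding h by simp
  qed
  moreover have "x \<noteq> A"
  proof
    assume xA: "x = A"
    define h where "h = min (d/2) (A - 1/2)"
    have "h > 0" "h < d" using d A by (auto simp: h_def)
    then have "psi k p A < psi k p (A - h)" using d by auto
    moreover have "A - h \<in> {1/2..A}" using \<open>h > 0\<close> min.cobounded2[of "d/2" "A - 1/2"] unfolding h_def atLeastAtMost_iff by linarith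
    ultimately show False using x(2) xA by fastforce
  qed
  ultimately have x2: "1/2 < x" "x < A" using x(1) by auto
  have "is_extremum_on {1/2..1} (psi k p) x" unfolding is_extremum_on_def
  proof (intro conjI exI[of _ "min (x - 1/2) (A - x)"] disjI1)
    show "\<forall>y\<in>{1/2..1}. \<bar>y - x\<bar> < min (x - 1/2) (A - x) \<longrightarrow> psi k p y \<le> psi k p x"
      using x(2) by (auto simp: abs_less_iff)
  qed (use x2 A in auto)
  then show ?thesis using x2 by (auto simp: A_def)
qed

lemma part3: assumes x: "1/2 < x" "x < A_k k"
  shows "(\<forall>p>1. is_extremum_on {1/2..1} (psi k p) x \<longleftrightarrow> p = p_tilde k x) \<and> p_tilde k x > 1"
proof
  have A: "A_k k < 1" using A_facts by simp
  show "p_tilde k x > 1"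
    using Q_bounds(1)[OF x] sign_Q(3)[OF x, of 1] T_eq T_gt by simp
  show "\<forall>p>1. is_extremum_on {1/2..1} (psi k p) x \<longleftrightarrow> p = p_tilde k x"
  proof (intro allI impI iffI)
    fix p :: real assume p1: "p > 1"
    then have p0: "p > 0" by simp
    have D: "DERIV (psi k p) x :> Dp p x" using x by (intro deriv_S) auto
    {
      assume "is_extremum_on {1/2..1} (psi k p) x"
      then obtain e where e: "e > 0" "(\<forall>y\<in>{1/2..1}. \<bar>y - x\<bar> < e \<longrightarrow> psi k p y \<le> psi k p x) \<or>
          (\<forall>y\<in>{1/2..1}. \<bar>y - x\<bar> < e \<longrightarrow> psi k p y \<ge> psi k p x)"
        unfolding is_extremum_on_def by blast
      define d where "d = min e (min (x - 1/2) (1 - x))"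
      have d0: "d > 0" using e x A by (simp add: d_def)
      have dS: "\<And>y. \<bar>x - y\<bar> < d \<Longrightarrow> y \<in> {1/2..1} \<and> \<bar>y - x\<bar> < e"
        by (auto simp: d_def abs_less_iff)
      have "Dp p x = 0"
        using e(2)
      proof
        assume h: "\<forall>y\<in>{1/2..1}. \<bar>y - x\<bar> < e \<longrightarrow> psi k p y \<le> psi k p x"
        show "Dp p x = 0" by (rule DERIV_local_max[OF D d0]) (use h dS in blast)
      next
        assume h: "\<forall>y\<in>{1/2..1}. \<bar>y - x\<bar> < e \<longrightarrow> psi k p y \<ge> psi k p x"
        show "Dp p x = 0" by (rule DERIV_local_min[OF D d0]) (use h dS in blast)
      qed
      then have "\<not> p > Ff x / Gf x - 1" "\<not> p < Ff x / Gf x - 1"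
        using sign_Q(1,2)[OF x p0] by auto
      then show "p = p_tilde k x" using sign_Q(3)[OF x p0] by linarith
    }
    assume pe: "p = p_tilde k x"
    then have pQ: "p = Ff x / Gf x - 1" using sign_Q(3)[OF x p0] by simp
    define e where "e = min (x - 1/2) (A_k k - x)"
    have e0: "e > 0" using x by (simp add: e_def)
    show "is_extremum_on {1/2..1} (psi k p) x" unfolding is_extremum_on_def
    proof (intro conjI exI[of _ e] disjI1)
      show "\<forall>y\<in>{1/2..1}. \<bar>y - x\<bar> < e \<longrightarrow> psi k p y \<le> psi k p x"
      proof (intro ballI impI)
        fix y :: real assume y: "y \<in> {1/2..1}" "\<bar>y - x\<bar> < e"
        consider "y < x" | "y = x" | "x < y" by linarith
        then show "psi k p y \<le> psi k p x"
        proof cases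
          case 1
          have y2: "1/2 < y" using y 1 by (auto simp: e_def abs_less_iff)
          have "psi k p y < psi k p x"
          proof (rule incr_help[where f = "psi k p" and f' = "Dp p" and a = y and b = x])
            show "y < x" by fact
          next
            fix w assume "y \<le> w" "w \<le> x"
            then show "DERIV (psi k p) w :> Dp p w" using y2 x by (intro deriv_S) auto
          next
            fix w assume w: "y < w" "w < x"
            have w2: "1/2 < w" "w < A_k k" using w y2 x by auto
            have "Ff w / Gf w < Ff x / Gf x" by (rule Q_mono) (use w w2 x in auto)
            then show "Dp p w > 0" using sign_Q(1)[OF w2 p0] pQ by simp
          qed
          then show ?thesis by simp
        next
          case 2 then show ?thesis by simp
        next
          case 3
          have y2: "y < A_k k" using y 3 by (auto simp: e_def abs_less_iff)
          have "psi k p y < psi k p x"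
          proof (rule decr_help[where f = "psi k p" and f' = "Dp p" and a = x and b = y])
            show "x < y" by fact
          next
            fix w assume "x \<le> w" "w \<le> y"
            then show "DERIV (psi k p) w :> Dp p w" using y2 x by (intro deriv_S) auto
          next
            fix w assume w: "x < w" "w < y"
            have w2: "1/2 < w" "w < A_k k" using w y2 x by auto
            have "Ff x / Gf x < Ff w / Gf w" by (rule Q_mono) (use w y2 x in auto)
            then show "Dp p w < 0" using sign_Q(2)[OF w2 p0] pQ by simp
          qed
          then show ?thesis by simp
        qed
      qed
    qed (use e0 x A in auto)
  qed
qed

end

theorem lemma4:
  fixes k :: nat
  assumes "k \<ge> 2"
  shows "(\<forall>p>1. is_extremum_on {1/2..1} (psi k p) (1/2) \<and> is_extremum_on {1/2..1} (psi k p) 1)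
    \<and> (\<exists>!A. 1/2 < A \<and> A < 1 \<and> cot (pi * A) = - 1 / (pi * (real k - A)))
    \<and> (\<forall>p. p > pi\<^sup>2 * (real k - 1/2)\<^sup>2 - 1 \<longrightarrow>
          (\<exists>x. 1/2 < x \<and> x < A_k k \<and> is_extremum_on {1/2..1} (psi k p) x))
    \<and> (\<forall>x. 1/2 < x \<and> x < A_k k \<longrightarrow>
          (\<forall>p>1. is_extremum_on {1/2..1} (psi k p) x \<longleftrightarrow> p = p_tilde k x)
          \<and> p_tilde k x > 1)"
  using part1_half[OF assms] part1_one[OF assms] A_unique[OF assms] part2[OF assms] part3[OF assms]
  by auto

end
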